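(* For every finite set $J$, the signatures $\mathrm{Even}_J$, $\mathrm{Odd}_J$ and $\mathrm{NAE}_J$ are windable.
   Context: $\mathrm{Even}_J,\mathrm{Odd}_J,\mathrm{NAE}_J:\{0,1\}^J\to\{0,1\}$: $\mathrm{Even}_J(x)=1$ iff $\sum_ix_i$ is even; $\mathrm{Odd}_J(x)=1$ iff $\sum_ix_i$ is odd; $\mathrm{NAE}_J(x)=1$ iff $1\le\sum_ix_i\le|J|-1$. For $x,y\in\{0,1\}^J$, $x\oplus y$ is coordinatewise addition mod 2, and $\mathbf S$ is the characteristic vector of $S\subseteq J$. For $z\in\{0,1\}^J$, $\mathrm{Match}'(z)$ is the set of partitions of $\{i:z_i=1\}$ into blocks of size 1 or 2. $F:\{0,1\}^J\to\mathbb{Q}_{\ge0}$ is windable if there exist $B(x,y,M)\ge0$ for all $x,y\in\{0,1\}^J$ and $M\in\mathrm{Match}'(x\oplus y)$ with (1) $F(x)F(y)=\sum_{M\in\mathrm{Match}'(x\oplus y)}B(x,y,M)$ for all $x,y$, and (2) $B(x,y,M)=B(x\oplus\mathbf S,y\oplus\mathbf S,M)$ for all $x,y$ and all $S\in M\in\mathrm{Match}'(x\oplus y)$. *)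

theory Defs
  imports Complex_Main "HOL-Library.Disjoint_Sets"
begin

(* Vectors x in {0,1}^J are represented by their supports X = {i. x_i = 1}, X \<subseteq> J.
   Coordinatewise addition mod 2 becomes symmetric difference, and the
   characteristic vector of S is S itself. *)

definition xorv :: "'a set \<Rightarrow> 'a set \<Rightarrow> 'a set" where
  "xorv X Y = (X - Y) \<union> (Y - X)"

definition vecs :: "'a set \<Rightarrow> 'a set set" where
  "vecs J = Pow J"

definition Even_sig :: "'a set \<Rightarrow> 'a set \<Rightarrow> rat" where
  "Even_sig J X = (if even (card X) then 1 else 0)"

definition Odd_sig :: "'a set \<Rightarrow> 'a set \<Rightarrow> rat" where
  "Odd_sig J X = (if odd (card X) then 1 else 0)"

definition NAE_sig :: "'a set \<Rightarrow> 'a set \<Rightarrow> rat" where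
  "NAE_sig J X = (if 1 \<le> card X \<and> card X \<le> card J - 1 then 1 else 0)"

definition Match' :: "'a set \<Rightarrow> 'a set set set" where
  "Match' Z = {M. partition_on Z M \<and> (\<forall>S\<in>M. card S = 1 \<or> card S = 2)}"

definition windable :: "'a set \<Rightarrow> ('a set \<Rightarrow> rat) \<Rightarrow> bool" where
  "windable J F \<longleftrightarrow>
     (\<exists>B :: 'a set \<Rightarrow> 'a set \<Rightarrow> 'a set set \<Rightarrow> rat.
        (\<forall>X\<in>vecs J. \<forall>Y\<in>vecs J. \<forall>M\<in>Match' (xorv X Y). B X Y M \<ge> 0)
      \<and> (\<forall>X\<in>vecs J. \<forall>Y\<in>vecs J. F X * F Y = (\<Sum>M\<in>Match' (xorv X Y). B X Y M))
      \<and> (\<forall>X\<in>vecs J. \<forall>Y\<in>vecs J. \<forall>M\<in>Match' (xorv X Y). \<forall>S\<in>M.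
            B X Y M = B (xorv X S) (xorv Y S) M))"

end

theory Submission imports Defs begin

definition pu :: "'a set set \<Rightarrow> 'a set" where "pu M = \<Union>{S\<in>M. card S = 2}"

lemma finite_Match: "finite z \<Longrightarrow> finite (Match' z)"
  by (rule finite_subset[OF _ finitely_many_partition_on[of z]]) (auto simp: Match'_def)

lemma pm_exists_aux: "finite V \<Longrightarrow> card V = 2 * k \<Longrightarrow> \<exists>P. partition_on V P \<and> (\<forall>S\<in>P. card S = 2)"
proof (induction k arbitrary: V)
  case 0
  then show ?case by (auto simp: partition_on_empty intro!: exI[of _ "{}"])
next
  case (Suc k)
  then have "V \<noteq> {}" by auto
  then obtain a where a: "a \<in> V" by auto
  have "card (V - {a}) = 2*k + 1" using Suc.prems a by simp
  then have "V - {a} \<noteq> {}" by (intro notI) simp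
  then obtain b where b: "b \<in> V - {a}" by auto
  have c: "card (V - {a,b}) = 2 * k" using Suc.prems a b
  proof -
    have e: "V - {a,b} = (V - {a}) - {b}" by auto
    show ?thesis unfolding e using b Suc.prems(1) \<open>card (V - {a}) = 2 * k + 1\<close> by (simp add: card_Diff_singleton)
  qed
  obtain P where P: "partition_on (V - {a,b}) P" "\<forall>S\<in>P. card S = 2"
    using Suc.IH[OF _ c] Suc.prems by auto
  have d: "disjnt {a,b} (\<Union>P)" using partition_onD1[OF P(1)] by (auto simp: disjnt_def)
  have "partition_on V (insert {a,b} P)"
    using partition_on_insert[OF d, of V] P a b by auto
  moreover have "\<forall>S\<in>insert {a,b} P. card S = 2" using P b by auto
  ultimately show ?case by blast
qed

lemma pm_exists: "finite V \<Longrightarrow> even (card V) \<Longrightarrow> \<exists>P. partition_on V P \<and> (\<forall>S\<in>P. card S = 2)"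
  using pm_exists_aux by (metis evenE)

lemma xor_card: "finite X \<Longrightarrow> finite S \<Longrightarrow> card (xorv X S) + 2 * card (X \<inter> S) = card X + card S"
proof -
  assume f: "finite X" "finite S"
  have "card (xorv X S) = card (X - S) + card (S - X)"
    unfolding xorv_def using f by (intro card_Un_disjoint) auto
  moreover have "card (X - S) + card (X \<inter> S) = card X" using f
    using card_Int_Diff[of X S] by simp
  moreover have "card (S - X) + card (X \<inter> S) = card S" using f
    using card_Int_Diff[of S X] by (simp add: Int_commute)
  ultimately show ?thesis by simp
qed

lemma xor_par2: "finite X \<Longrightarrow> card S = 2 \<Longrightarrow> even (card (xorv X S)) = even (card X)"
proof -
  assume "finite X" "card S = 2"
  then have "finite S" using card.infinite by fastforce
  from xor_card[OF \<open>finite X\<close> this] \<open>card S = 2\<close> show ?thesis by presburger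
qed

lemma xorv_xorv: "xorv (xorv X S) (xorv Y S) = xorv X Y"
  by (auto simp: xorv_def)

lemma pu_sub: "M \<in> Match' z \<Longrightarrow> pu M \<subseteq> z"
  unfolding pu_def Match'_def partition_on_def by auto

lemma Match_fin_el: "finite z \<Longrightarrow> M \<in> Match' z \<Longrightarrow> finite M"
  unfolding Match'_def using finite_elements by blast

lemma pu_even: "finite z \<Longrightarrow> M \<in> Match' z \<Longrightarrow> even (card (pu M))"
proof -
  assume fz: "finite z" and M: "M \<in> Match' z"
  let ?C = "{S\<in>M. card S = 2}"
  have d: "pairwise disjnt ?C"
    using M unfolding Match'_def partition_on_def by (auto intro: pairwise_subset)
  have "card (pu M) = sum card ?C"
    unfolding pu_def by (rule card_Union_disjoint[OF d]) (auto intro: card_ge_0_finite)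
  also have "\<dots> = sum (\<lambda>_. 2) ?C" by (rule sum.cong) auto
  also have "\<dots> = 2 * card ?C" by simp
  finally show ?thesis by simp
qed

lemma pu_image_ex: "finite z \<Longrightarrow> V \<subseteq> z \<Longrightarrow> even (card V) \<Longrightarrow> \<exists>M\<in>Match' z. pu M = V"
proof -
  assume fz: "finite z" and Vz: "V \<subseteq> z" and ev: "even (card V)"
  have fV: "finite V" using fz Vz finite_subset by blast
  obtain P where P: "partition_on V P" "\<forall>S\<in>P. card S = 2" using pm_exists[OF fV ev] by blast
  have P1: "\<Union>P = V" and P2: "disjoint P" and P3: "{} \<notin> P" using P(1) unfolding partition_on_def by auto
  let ?M = "P \<union> (\<lambda>i. {i}) ` (z - V)"
  have "partition_on z ?M"
  proof (rule partition_onI)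
    show "\<Union>?M = z" using P1 Vz by auto
    show "{} \<notin> ?M" using P3 by auto
    fix p q assume pq: "p \<in> ?M" "q \<in> ?M" "p \<noteq> q"
    have sub: "\<And>p. p \<in> P \<Longrightarrow> p \<subseteq> V" using P1 by blast
    from pq consider "p \<in> P" "q \<in> P" | "p \<in> P" "q \<in> (\<lambda>i. {i}) ` (z - V)"
      | "p \<in> (\<lambda>i. {i}) ` (z - V)" "q \<in> P" | "p \<in> (\<lambda>i. {i}) ` (z - V)" "q \<in> (\<lambda>i. {i}) ` (z - V)"
      by blast
    then show "disjnt p q"
    proof cases
      case 1
      then show ?thesis using P2 pq(3) by (simp add: pairwise_def)
    next
      case 2
      then obtain i where "q = {i}" "i \<notin> V" by blast
      with sub[OF 2(1)] show ?thesis by (auto simp: disjnt_def)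
    next
      case 3
      then obtain i where "p = {i}" "i \<notin> V" by blast
      with sub[OF 3(2)] show ?thesis by (auto simp: disjnt_def)
    next
      case 4
      then obtain i j where "p = {i}" "q = {j}" by blast
      with pq(3) show ?thesis by (auto simp: disjnt_def)
    qed
  qed
  moreover have "\<forall>S\<in>?M. card S = 1 \<or> card S = 2" using P(2) by auto
  ultimately have "?M \<in> Match' z" unfolding Match'_def by auto
  moreover have "pu ?M = V"
  proof -
    have "{S\<in>?M. card S = 2} = P" using P(2) by auto
    then show ?thesis unfolding pu_def using P1 by simp
  qed
  ultimately show ?thesis by blast
qed

lemma pu_image: "finite z \<Longrightarrow> pu ` Match' z = {V. V \<subseteq> z \<and> even (card V)}"
proof (intro equalityI subsetI)
  fix V assume fz: "finite z" and "V \<in> pu ` Match' z"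
  then obtain M where M: "M \<in> Match' z" "V = pu M" by blast
  then show "V \<in> {V. V \<subseteq> z \<and> even (card V)}" using pu_sub[OF M(1)] pu_even[OF fz M(1)] M(2) by simp
next
  fix V assume fz: "finite z" and "V \<in> {V. V \<subseteq> z \<and> even (card V)}"
  then obtain M where "M \<in> Match' z" "pu M = V" using pu_image_ex by blast
  then show "V \<in> pu ` Match' z" by blast
qed

definition Gc :: "'a set \<Rightarrow> 'a set \<Rightarrow> nat" where
  "Gc z V = card {M\<in>Match' z. pu M = V}"

lemma Gc_pos:
  assumes fz: "finite z" and V: "V \<in> pu ` Match' z"
  shows "Gc z V > 0"
proof -
  obtain M where M: "M \<in> Match' z" "pu M = V" using V by blast
  then have "M \<in> {M\<in>Match' z. pu M = V}" by simp
  moreover have "finite {M\<in>Match' z. pu M = V}" using finite_Match[OF fz] by simp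
  ultimately show ?thesis unfolding Gc_def using card_gt_0_iff by blast
qed

lemma sum_group: "finite z \<Longrightarrow> (\<Sum>M\<in>Match' z. (f (pu M) :: rat)) = (\<Sum>V\<in>pu ` Match' z. of_nat (Gc z V) * f V)"
proof -
  assume fz: "finite z"
  have "(\<Sum>M\<in>Match' z. f (pu M)) = (\<Sum>V\<in>pu ` Match' z. \<Sum>M\<in>{M\<in>Match' z. pu M = V}. f (pu M))"
    by (rule sum.image_gen[OF finite_Match[OF fz]])
  also have "\<dots> = (\<Sum>V\<in>pu ` Match' z. of_nat (Gc z V) * f V)"
  proof (rule sum.cong[OF refl])
    fix V
    have "(\<Sum>M\<in>{M\<in>Match' z. pu M = V}. f (pu M)) = (\<Sum>M\<in>{M\<in>Match' z. pu M = V}. f V)"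
      by (rule sum.cong) auto
    then show "(\<Sum>M\<in>{M\<in>Match' z. pu M = V}. f (pu M)) = of_nat (Gc z V) * f V"
      unfolding Gc_def by simp
  qed
  finally show ?thesis .
qed

lemma half_count:
  assumes fU: "finite U" and inv: "\<And>u. u \<in> U \<Longrightarrow> f u \<in> U \<and> f (f u) = u \<and> (P (f u) \<longleftrightarrow> \<not> P u)"
  shows "2 * card {u\<in>U. P u} = card U"
proof -
  let ?A = "{u\<in>U. P u}" and ?B = "{u\<in>U. \<not> P u}"
  have "bij_betw f ?A ?B"
    by (rule bij_betw_byWitness[where f'=f]) (use inv in auto)
  then have "card ?A = card ?B" by (rule bij_betw_same_card)
  moreover have "card U = card ?A + card ?B"
  proof -
    have "U = ?A \<union> ?B" by auto
    then have "card U = card (?A \<union> ?B)" by simp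
    also have "\<dots> = card ?A + card ?B" using fU by (intro card_Un_disjoint) auto
    finally show ?thesis .
  qed
  ultimately show ?thesis by simp
qed

lemma toggle_in: "finite V \<Longrightarrow> a \<in> A \<Longrightarrow> odd (card (A \<inter> xorv V {a})) = even (card (A \<inter> V))"
proof -
  assume fV: "finite V" and aA: "a \<in> A"
  show ?thesis
  proof (cases "a \<in> V")
    case True
    then have e: "A \<inter> xorv V {a} = (A \<inter> V) - {a}" by (auto simp: xorv_def)
    have c1: "card (A \<inter> V) \<ge> 1" using True aA fV by (auto simp: Suc_le_eq card_gt_0_iff)
    have e2: "card (A \<inter> V - {a}) = card (A \<inter> V) - 1" using True aA fV by (simp add: card_Diff_singleton)
    show ?thesis unfolding e e2 using c1 by (cases "card (A \<inter> V)") auto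
  next
    case False
    then have e: "A \<inter> xorv V {a} = insert a (A \<inter> V)" using aA by (auto simp: xorv_def)
    show ?thesis unfolding e using False fV by simp
  qed
qed

lemma toggle_out: "a \<notin> A \<Longrightarrow> A \<inter> xorv V {a} = A \<inter> V"
  by (auto simp: xorv_def)

lemma xorv_invol: "xorv (xorv V {a}) {a} = V"
  by (auto simp: xorv_def)

lemma count_odd:
  assumes fz: "finite z" and a: "a \<in> z" "a \<in> X" and b: "b \<in> z" "b \<notin> X"
  shows "4 * card {V. V \<subseteq> z \<and> odd (card (X \<inter> V)) \<and> odd (card ((z - X) \<inter> V))} = 2 ^ card z"
proof -
  let ?O = "{V\<in>Pow z. odd (card ((z - X) \<inter> V))}"
  have fin: "\<And>V. V \<in> Pow z \<Longrightarrow> finite V" using fz finite_subset by auto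
  have "2 * card ?O = card (Pow z)"
  proof (rule half_count)
    show "finite (Pow z)" using fz by simp
    fix u assume u: "u \<in> Pow z"
    have 1: "xorv u {b} \<in> Pow z" using u b(1) unfolding xorv_def by blast
    have 2: "odd (card ((z - X) \<inter> xorv u {b})) = even (card ((z - X) \<inter> u))"
      using toggle_in[OF fin[OF u], of b "z - X"] b by blast
    show "xorv u {b} \<in> Pow z \<and> xorv (xorv u {b}) {b} = u \<and> (odd (card ((z - X) \<inter> xorv u {b})) \<longleftrightarrow> \<not> odd (card ((z - X) \<inter> u)))"
      using 1 2 xorv_invol by simp
  qed
  moreover have "2 * card {V\<in>?O. odd (card (X \<inter> V))} = card ?O"
  proof (rule half_count)
    show "finite ?O" using fz by simp
    fix u assume u: "u \<in> ?O"
    have ux: "(z - X) \<inter> xorv u {a} = (z - X) \<inter> u" using a by (intro toggle_out) blast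
    have 1: "xorv u {a} \<in> Pow z" using u a(1) unfolding xorv_def by blast
    have 2: "odd (card (X \<inter> xorv u {a})) = even (card (X \<inter> u))"
      using toggle_in[OF fin, of u a X] u a by blast
    show "xorv u {a} \<in> ?O \<and> xorv (xorv u {a}) {a} = u \<and> (odd (card (X \<inter> xorv u {a})) \<longleftrightarrow> \<not> odd (card (X \<inter> u)))"
      using 1 2 u ux xorv_invol by simp
  qed
  moreover have "{V\<in>?O. odd (card (X \<inter> V))} = {V. V \<subseteq> z \<and> odd (card (X \<inter> V)) \<and> odd (card ((z - X) \<inter> V))}"
    by blast
  ultimately have "2 * card {V. V \<subseteq> z \<and> odd (card (X \<inter> V)) \<and> odd (card ((z - X) \<inter> V))} = card ?O"
    and "2 * card ?O = 2 ^ card z" using card_Pow[of z] fz by (simp_all only:)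
  then show ?thesis by linarith
qed

lemma sum_if_const: "finite A \<Longrightarrow> (\<Sum>x\<in>A. if P x then (c::rat) else 0) = of_nat (card {x\<in>A. P x}) * c"
  by (simp add: sum.inter_filter[symmetric])

lemma windable_par:
  assumes fJ: "finite J" and F: "\<And>X. F X = (if Q (even (card X)) then 1 else 0)"
    and Q: "\<And>a b. Q a \<Longrightarrow> Q b \<Longrightarrow> a = b"
  shows "windable J F"
proof -
  define PMc where "PMc z = card {M\<in>Match' z. \<forall>S\<in>M. card S = 2}" for z :: "'a set"
  define B where "B X Y M = (if Q (even (card X)) \<and> Q (even (card Y)) \<and> (\<forall>S\<in>M. card S = 2)
      then 1 / of_nat (PMc (xorv X Y)) else (0::rat))" for X Y :: "'a set" and M :: "'a set set"
  have fin: "finite X" if "X \<in> vecs J" for X using fJ that by (auto simp: vecs_def intro: finite_subset)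
  have c1: "\<forall>X\<in>vecs J. \<forall>Y\<in>vecs J. \<forall>M\<in>Match' (xorv X Y). B X Y M \<ge> 0" by (simp add: B_def)
  have c2: "\<forall>X\<in>vecs J. \<forall>Y\<in>vecs J. F X * F Y = (\<Sum>M\<in>Match' (xorv X Y). B X Y M)"
  proof (intro ballI)
    fix X Y assume X: "X \<in> vecs J" and Y: "Y \<in> vecs J"
    let ?z = "xorv X Y"
    have fz: "finite ?z" using fin[OF X] fin[OF Y] by (simp add: xorv_def)
    show "F X * F Y = (\<Sum>M\<in>Match' ?z. B X Y M)"
    proof (cases "Q (even (card X)) \<and> Q (even (card Y))")
      case True
      then have eq: "even (card X) = even (card Y)" using Q by blast
      have e: "card ?z + 2 * card (X \<inter> Y) = card X + card Y" using xor_card[OF fin[OF X] fin[OF Y]] .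
      have "even (card X + card Y)" using eq by simp
      then have "even (card ?z + 2 * card (X \<inter> Y))" by (simp only: e)
      then have ev: "even (card ?z)" by simp
      obtain P where P: "partition_on ?z P" "\<forall>S\<in>P. card S = 2" using pm_exists[OF fz ev] by blast
      then have "P \<in> {M\<in>Match' ?z. \<forall>S\<in>M. card S = 2}" by (auto simp: Match'_def)
      moreover have "finite {M\<in>Match' ?z. \<forall>S\<in>M. card S = 2}" using finite_Match[OF fz] by simp
      ultimately have pos: "PMc ?z > 0" unfolding PMc_def using card_gt_0_iff by blast
      have "(\<Sum>M\<in>Match' ?z. B X Y M) = (\<Sum>M\<in>Match' ?z. if (\<forall>S\<in>M. card S = 2) then 1 / of_nat (PMc ?z) else 0)"
        using True by (simp add: B_def)
      also have "\<dots> = of_nat (card {M\<in>Match' ?z. \<forall>S\<in>M. card S = 2}) * (1 / of_nat (PMc ?z))"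
        by (rule sum_if_const[OF finite_Match[OF fz]])
      also have "\<dots> = 1" using pos unfolding PMc_def[symmetric] by simp
      finally show ?thesis using True F by simp
    next
      case False
      then have "F X * F Y = 0" using F by auto
      moreover have "(\<Sum>M\<in>Match' ?z. B X Y M) = 0"
      proof -
        have "\<And>M. B X Y M = 0" using False by (auto simp: B_def)
        then show ?thesis by simp
      qed
      ultimately show ?thesis by simp
    qed
  qed
  have c3: "\<forall>X\<in>vecs J. \<forall>Y\<in>vecs J. \<forall>M\<in>Match' (xorv X Y). \<forall>S\<in>M. B X Y M = B (xorv X S) (xorv Y S) M"
  proof (intro ballI)
    fix X Y M S assume X: "X \<in> vecs J" and Y: "Y \<in> vecs J" and M: "M \<in> Match' (xorv X Y)" and S: "S \<in> M"
    show "B X Y M = B (xorv X S) (xorv Y S) M"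
    proof (cases "\<forall>S\<in>M. card S = 2")
      case True
      then have "card S = 2" using S by blast
      then have "even (card (xorv X S)) = even (card X)" "even (card (xorv Y S)) = even (card Y)"
        using xor_par2 fin[OF X] fin[OF Y] by auto
      then show ?thesis using True by (simp add: B_def xorv_xorv)
    next
      case False
      then have h: "(\<forall>S\<in>M. card S = 2) = False" by simp
      show ?thesis unfolding B_def h by simp
    qed
  qed
  show ?thesis unfolding windable_def by (intro exI[of _ B]) (use c1 c2 c3 in blast)
qed

lemma windable_even: "finite J \<Longrightarrow> windable J (Even_sig J)"
  by (rule windable_par[where Q = "\<lambda>b. b"]) (auto simp: Even_sig_def)

lemma windable_odd: "finite J \<Longrightarrow> windable J (Odd_sig J)"
  by (rule windable_par[where Q = "\<lambda>b. \<not> b"]) (auto simp: Odd_sig_def)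

lemma nae_val:
  assumes fJ: "finite J" and XJ: "X \<subseteq> J"
  shows "NAE_sig J X = (if X \<noteq> {} \<and> X \<noteq> J then 1 else 0)"
proof -
  have fX: "finite X" using fJ XJ finite_subset by blast
  have "(1 \<le> card X \<and> card X \<le> card J - 1) \<longleftrightarrow> (X \<noteq> {} \<and> X \<noteq> J)"
  proof
    assume h: "1 \<le> card X \<and> card X \<le> card J - 1"
    then show "X \<noteq> {} \<and> X \<noteq> J" by auto
  next
    assume h: "X \<noteq> {} \<and> X \<noteq> J"
    then have "X \<subset> J" using XJ by blast
    then have "card X < card J" using fJ by (rule psubset_card_mono[rotated])
    moreover have "card X \<ge> 1" using h fX by (simp add: Suc_le_eq card_gt_0_iff)
    ultimately show "1 \<le> card X \<and> card X \<le> card J - 1" by linarith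
  qed
  then show ?thesis by (simp add: NAE_sig_def)
qed

lemma inv_parity:
  assumes fz: "finite z" and M: "M \<in> Match' z" and S: "S \<in> M"
  shows "odd (card (xorv X S \<inter> pu M)) = odd (card (X \<inter> pu M))"
proof -
  have pM: "partition_on z M" and cS: "card S = 1 \<or> card S = 2" using M S unfolding Match'_def by auto
  have disj: "\<And>T. T \<in> M \<Longrightarrow> T \<noteq> S \<Longrightarrow> T \<inter> S = {}"
    using partition_onD2[OF pM] S unfolding disjoint_def by blast
  have fpu: "finite (pu M)" using pu_sub[OF M] fz finite_subset by blast
  show ?thesis
  proof (cases "card S = 2")
    case True
    then have "S \<subseteq> pu M" using S unfolding pu_def by blast
    then have e: "xorv X S \<inter> pu M = xorv (X \<inter> pu M) S" by (auto simp: xorv_def)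
    show ?thesis unfolding e using xor_par2[OF _ True, of "X \<inter> pu M"] fpu by simp
  next
    case False
    then have c1: "card S = 1" using cS by blast
    have "S \<inter> pu M = {}"
    proof -
      have "\<And>T. T \<in> M \<Longrightarrow> card T = 2 \<Longrightarrow> T \<inter> S = {}" using disj c1 by fastforce
      then show ?thesis unfolding pu_def by blast
    qed
    then have e: "xorv X S \<inter> pu M = X \<inter> pu M" by (auto simp: xorv_def)
    show ?thesis unfolding e ..
  qed
qed

lemma case2_iff:
  assumes XJ: "X \<subseteq> J" and YJ: "Y \<subseteq> J"
    and nc: "\<not> (\<exists>i\<in>J - xorv X Y. \<exists>j\<in>J - xorv X Y. i \<in> X \<and> j \<notin> X)"
  shows "(X \<noteq> {} \<and> X \<noteq> J \<and> Y \<noteq> {} \<and> Y \<noteq> J) \<longleftrightarrow> (X \<inter> xorv X Y \<noteq> {} \<and> \<not> xorv X Y \<subseteq> X)"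
proof -
  let ?z = "xorv X Y"
  have out: "\<And>i. i \<notin> ?z \<Longrightarrow> (i \<in> Y \<longleftrightarrow> i \<in> X)" by (auto simp: xorv_def)
  have inn: "\<And>i. i \<in> ?z \<Longrightarrow> (i \<in> Y \<longleftrightarrow> i \<notin> X)" by (auto simp: xorv_def)
  have zJ: "?z \<subseteq> J" using XJ YJ by (auto simp: xorv_def)
  have A: "J - ?z \<subseteq> X \<or> (J - ?z) \<inter> X = {}" using nc by blast
  show ?thesis
  proof
    assume h: "X \<noteq> {} \<and> X \<noteq> J \<and> Y \<noteq> {} \<and> Y \<noteq> J"
    show "X \<inter> ?z \<noteq> {} \<and> \<not> ?z \<subseteq> X"
      using A
    proof
      assume A1: "J - ?z \<subseteq> X"
      have "\<not> ?z \<subseteq> X" using h A1 zJ XJ by blast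
      moreover have "X \<inter> ?z \<noteq> {}"
      proof
        assume "X \<inter> ?z = {}"
        then have "J \<subseteq> Y" using A1 out inn by blast
        then show False using h YJ by blast
      qed
      ultimately show ?thesis by blast
    next
      assume A2: "(J - ?z) \<inter> X = {}"
      have "X \<inter> ?z \<noteq> {}" using h A2 XJ by blast
      moreover have "\<not> ?z \<subseteq> X"
      proof
        assume "?z \<subseteq> X"
        then have "Y = {}" using A2 out inn YJ by blast
        then show False using h by blast
      qed
      ultimately show ?thesis by blast
    qed
  next
    assume h: "X \<inter> ?z \<noteq> {} \<and> \<not> ?z \<subseteq> X"
    then obtain a b where a: "a \<in> X" "a \<in> ?z" and b: "b \<in> ?z" "b \<notin> X" by blast
    have "a \<notin> Y" "b \<in> Y" using a b inn by auto
    then show "X \<noteq> {} \<and> X \<noteq> J \<and> Y \<noteq> {} \<and> Y \<noteq> J" using a b zJ by blast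
  qed
qed

lemma card_split: "finite V \<Longrightarrow> V \<subseteq> z \<Longrightarrow> card V = card (X \<inter> V) + card ((z - X) \<inter> V)"
proof -
  assume fV: "finite V" and Vz: "V \<subseteq> z"
  have "V = (X \<inter> V) \<union> ((z - X) \<inter> V)" using Vz by blast
  then have "card V = card ((X \<inter> V) \<union> ((z - X) \<inter> V))" by simp
  also have "\<dots> = card (X \<inter> V) + card ((z - X) \<inter> V)" using fV by (intro card_Un_disjoint) auto
  finally show ?thesis .
qed

lemma nae_sum:
  assumes fz: "finite z"
  shows "(\<Sum>M\<in>Match' z. (if odd (card (X \<inter> pu M)) then 1 / (2 ^ (card z - 2) * of_nat (Gc z (pu M))) else (0::rat)))
    = (if X \<inter> z \<noteq> {} \<and> \<not> z \<subseteq> X then 1 else 0)"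
proof -
  define f where "f V = (if odd (card (X \<inter> V)) then 1 / (2 ^ (card z - 2) * of_nat (Gc z V)) else (0::rat))" for V
  let ?I = "pu ` Match' z"
  have "(\<Sum>M\<in>Match' z. (if odd (card (X \<inter> pu M)) then 1 / (2 ^ (card z - 2) * of_nat (Gc z (pu M))) else (0::rat)))
      = (\<Sum>M\<in>Match' z. f (pu M))" unfolding f_def ..
  also have "\<dots> = (\<Sum>V\<in>?I. of_nat (Gc z V) * f V)" by (rule sum_group[OF fz])
  also have "\<dots> = (\<Sum>V\<in>?I. if odd (card (X \<inter> V)) then 1 / 2 ^ (card z - 2) else 0)"
  proof (rule sum.cong[OF refl])
    fix V assume "V \<in> ?I"
    then have "Gc z V > 0" by (rule Gc_pos[OF fz])
    then show "of_nat (Gc z V) * f V = (if odd (card (X \<inter> V)) then 1 / 2 ^ (card z - 2) else 0)"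
      unfolding f_def by simp
  qed
  also have "\<dots> = of_nat (card {V\<in>?I. odd (card (X \<inter> V))}) * (1 / 2 ^ (card z - 2))"
    by (rule sum_if_const) (simp add: finite_Match[OF fz])
  also have "{V\<in>?I. odd (card (X \<inter> V))} = {V. V \<subseteq> z \<and> odd (card (X \<inter> V)) \<and> odd (card ((z - X) \<inter> V))}"
  proof -
    have "\<And>V. V \<subseteq> z \<Longrightarrow> (even (card V) \<and> odd (card (X \<inter> V))) = (odd (card (X \<inter> V)) \<and> odd (card ((z - X) \<inter> V)))"
    proof -
      fix V assume Vz: "V \<subseteq> z"
      then have "finite V" using fz finite_subset by blast
      have "card V = card (X \<inter> V) + card ((z - X) \<inter> V)" by (rule card_split[OF \<open>finite V\<close> Vz])
      then show "(even (card V) \<and> odd (card (X \<inter> V))) = (odd (card (X \<inter> V)) \<and> odd (card ((z - X) \<inter> V)))"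
        by simp blast
    qed
    then show ?thesis unfolding pu_image[OF fz] by blast
  qed
  finally have main: "(\<Sum>M\<in>Match' z. (if odd (card (X \<inter> pu M)) then 1 / (2 ^ (card z - 2) * of_nat (Gc z (pu M))) else (0::rat)))
     = of_nat (card {V. V \<subseteq> z \<and> odd (card (X \<inter> V)) \<and> odd (card ((z - X) \<inter> V))}) * (1 / 2 ^ (card z - 2))" .
  show ?thesis
  proof (cases "X \<inter> z \<noteq> {} \<and> \<not> z \<subseteq> X")
    case True
    then obtain a b where a: "a \<in> z" "a \<in> X" and b: "b \<in> z" "b \<notin> X" by blast
    have c4: "4 * card {V. V \<subseteq> z \<and> odd (card (X \<inter> V)) \<and> odd (card ((z - X) \<inter> V))} = 2 ^ card z"
      by (rule count_odd[OF fz a b])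
    have "a \<noteq> b" using a b by blast
    then have "card {a, b} \<le> card z" using a b fz by (intro card_mono) auto
    then have n2: "card z \<ge> 2" using \<open>a \<noteq> b\<close> by simp
    then have "(2::nat) ^ card z = 4 * 2 ^ (card z - 2)"
      by (metis le_add_diff_inverse power_add power2_eq_square numeral_Bit0 mult_2 numeral_One)
    then have "card {V. V \<subseteq> z \<and> odd (card (X \<inter> V)) \<and> odd (card ((z - X) \<inter> V))} = 2 ^ (card z - 2)"
      using c4 by simp
    then show ?thesis using main True by simp
  next
    case False
    have E: "{V. V \<subseteq> z \<and> odd (card (X \<inter> V)) \<and> odd (card ((z - X) \<inter> V))} = {}"
    proof -
      have "\<And>V. V \<subseteq> z \<Longrightarrow> even (card (X \<inter> V)) \<or> even (card ((z - X) \<inter> V))"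
      proof -
        fix V assume Vz: "V \<subseteq> z"
        show "even (card (X \<inter> V)) \<or> even (card ((z - X) \<inter> V))"
        proof (cases "X \<inter> z = {}")
          case True
          then have "X \<inter> V = {}" using Vz by blast
          then show ?thesis by simp
        next
          case False
          then have "z \<subseteq> X" using \<open>\<not> (X \<inter> z \<noteq> {} \<and> \<not> z \<subseteq> X)\<close> by blast
          then have "(z - X) \<inter> V = {}" by blast
          then show ?thesis by simp
        qed
      qed
      then show ?thesis by blast
    qed
    show ?thesis using main[unfolded E] False by simp
  qed
qed

lemma windable_nae:
  assumes fJ: "finite J"
  shows "windable J (NAE_sig J)"
proof -
  define cA where "cA X Y = (\<exists>i\<in>J - xorv X Y. \<exists>j\<in>J - xorv X Y. i \<in> X \<and> j \<notin> X)" for X Y :: "'a set"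
  define B where "B X Y M = (if cA X Y then (if M = (\<lambda>i. {i}) ` xorv X Y then 1 else 0)
     else (if odd (card (X \<inter> pu M)) then 1 / (2 ^ (card (xorv X Y) - 2) * of_nat (Gc (xorv X Y) (pu M))) else (0::rat)))" for X Y :: "'a set" and M :: "'a set set"
  have sub: "X \<subseteq> J" if "X \<in> vecs J" for X using that by (simp add: vecs_def)
  have fin: "finite X" if "X \<in> vecs J" for X using fJ sub[OF that] finite_subset by blast
  have c1: "\<forall>X\<in>vecs J. \<forall>Y\<in>vecs J. \<forall>M\<in>Match' (xorv X Y). B X Y M \<ge> 0" by (simp add: B_def)
  have c2: "\<forall>X\<in>vecs J. \<forall>Y\<in>vecs J. NAE_sig J X * NAE_sig J Y = (\<Sum>M\<in>Match' (xorv X Y). B X Y M)"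
  proof (intro ballI)
    fix X Y assume X: "X \<in> vecs J" and Y: "Y \<in> vecs J"
    let ?z = "xorv X Y"
    have fz: "finite ?z" using fin[OF X] fin[OF Y] by (simp add: xorv_def)
    show "NAE_sig J X * NAE_sig J Y = (\<Sum>M\<in>Match' ?z. B X Y M)"
    proof (cases "cA X Y")
      case True
      then obtain i j where ij: "i \<in> J" "i \<notin> ?z" "j \<in> J" "j \<notin> ?z" "i \<in> X" "j \<notin> X" unfolding cA_def by blast
      have "i \<in> Y" "j \<notin> Y" using ij by (auto simp: xorv_def)
      then have v: "NAE_sig J X = 1" "NAE_sig J Y = 1"
        using ij nae_val[OF fJ sub[OF X]] nae_val[OF fJ sub[OF Y]] by auto
      have sm: "(\<lambda>i. {i}) ` ?z \<in> Match' ?z" unfolding Match'_def using partition_on_singletons by auto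
      have "(\<Sum>M\<in>Match' ?z. B X Y M) = (\<Sum>M\<in>Match' ?z. if M = (\<lambda>i. {i}) ` ?z then 1 else 0)"
        using True by (simp add: B_def)
      also have "\<dots> = 1" using sm finite_Match[OF fz] by simp
      finally show ?thesis using v by simp
    next
      case False
      have "(\<Sum>M\<in>Match' ?z. B X Y M) = (\<Sum>M\<in>Match' ?z. (if odd (card (X \<inter> pu M)) then 1 / (2 ^ (card ?z - 2) * of_nat (Gc ?z (pu M))) else (0::rat)))"
        using False by (simp add: B_def)
      also have "\<dots> = (if X \<inter> ?z \<noteq> {} \<and> \<not> ?z \<subseteq> X then 1 else 0)" by (rule nae_sum[OF fz])
      also have "\<dots> = NAE_sig J X * NAE_sig J Y"
        using case2_iff[OF sub[OF X] sub[OF Y] False[unfolded cA_def]]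
          nae_val[OF fJ sub[OF X]] nae_val[OF fJ sub[OF Y]] by auto
      finally show ?thesis by simp
    qed
  qed
  have c3: "\<forall>X\<in>vecs J. \<forall>Y\<in>vecs J. \<forall>M\<in>Match' (xorv X Y). \<forall>S\<in>M. B X Y M = B (xorv X S) (xorv Y S) M"
  proof (intro ballI)
    fix X Y M S assume X: "X \<in> vecs J" and Y: "Y \<in> vecs J" and M: "M \<in> Match' (xorv X Y)" and S: "S \<in> M"
    let ?z = "xorv X Y"
    have fz: "finite ?z" using fin[OF X] fin[OF Y] by (simp add: xorv_def)
    have Sz: "S \<subseteq> ?z" using M S unfolding Match'_def partition_on_def by blast
    have key: "\<And>i. i \<notin> ?z \<Longrightarrow> (i \<in> xorv X S \<longleftrightarrow> i \<in> X)" using Sz by (auto simp: xorv_def)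
    have cAe: "cA (xorv X S) (xorv Y S) = cA X Y"
      unfolding cA_def xorv_xorv
    proof
      assume "\<exists>i\<in>J - ?z. \<exists>j\<in>J - ?z. i \<in> xorv X S \<and> j \<notin> xorv X S"
      then obtain i j where "i \<in> J - ?z" "j \<in> J - ?z" "i \<in> xorv X S" "j \<notin> xorv X S" by blast
      then show "\<exists>i\<in>J - ?z. \<exists>j\<in>J - ?z. i \<in> X \<and> j \<notin> X" using key by blast
    next
      assume "\<exists>i\<in>J - ?z. \<exists>j\<in>J - ?z. i \<in> X \<and> j \<notin> X"
      then obtain i j where "i \<in> J - ?z" "j \<in> J - ?z" "i \<in> X" "j \<notin> X" by blast
      then show "\<exists>i\<in>J - ?z. \<exists>j\<in>J - ?z. i \<in> xorv X S \<and> j \<notin> xorv X S" using key by blast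
    qed
    have pe: "odd (card (xorv X S \<inter> pu M)) = odd (card (X \<inter> pu M))" by (rule inv_parity[OF fz M S])
    show "B X Y M = B (xorv X S) (xorv Y S) M"
      unfolding B_def xorv_xorv cAe pe ..
  qed
  show ?thesis unfolding windable_def by (intro exI[of _ B]) (use c1 c2 c3 in blast)
qed

theorem lemma10:
  fixes J :: "'a set"
  assumes "finite J"
  shows "windable J (Even_sig J) \<and> windable J (Odd_sig J) \<and> windable J (NAE_sig J)"
  using windable_even[OF assms] windable_odd[OF assms] windable_nae[OF assms] by blast

end
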